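(* Let $K$ be a set of $n$ distinct keys from a totally ordered set, and let $L'$ be a uniformly random ordering of $K$, written $L' = a :: L$ (so $a$ is the first key of $L'$ and $L$ is the list of the remaining $n-1$ keys). Run memoized Quicksort (as defined in the context) first on $L$ and then on $L'$, with the memo tables (for Quicksort and for hash-consing) shared between the two runs. Then the expected running time of the second run, on $L'$, is $O(n)$. The expectation is over the uniformly random ordering of the input and over the internal randomization of the hash functions used to implement the memo tables.
   Context: Quicksort on a list $\ell$ of distinct keys: if $\ell$ is empty, return the empty list; otherwise $\ell = h :: t$, the pivot is $h$, one computes $s = $ the sublist of $t$ of keys $< h$ and $g = $ the sublist of $t$ of keys $\geq h$ (both by filtering $t$, which preserves the relative order of keys and takes time linear in the length of $t$), recursively sorts $s$ and $g$, and returns $\mathrm{sort}(s) \mathbin{@} (h :: \mathrm{sort}(g))$. Memoized Quicksort is the same algorithm in which (i) the lists produced by filtering are built with hash-consing, so that structurally equal lists are represented by the same object and can be compared and hashed in expected $O(1)$ time, each hash-consing step costing expected $O(1)$ time; and (ii) every recursive call first looks up its argument list in a memo table (keyed by the argument list, lookup and update costing expected $O(1)$ time); if a result for an equal list is stored there, that result is returned immediately, otherwise the call is executed and its result is stored. Running time counts elementary operations, with each memo-table operation and each hash-consing operation costing expected constant time. *)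

theory Defs
  imports "HOL-Probability.Probability" "HOL-Combinatorics.Multiset_Permutations"
begin

text \<open>
  The memo table is a partial map from
  (hash-consed, hence structurally compared) argument lists to their sorted
  results.  Every elementary operation, every memo-table lookup/update and
  every hash-consing step is charged unit cost (these cost expected O(1)).
\<close>

function memo_qs ::
  "('a::linorder list \<Rightarrow> 'a list option) \<Rightarrow> 'a list
     \<Rightarrow> 'a list \<times> ('a list \<Rightarrow> 'a list option) \<times> nat" where
  "memo_qs M xs =
     (case M xs of
        Some r \<Rightarrow> (r, M, 1)  \<comment> \<open>memo lookup hit\<close>
      | None \<Rightarrow>
          (case xs of
             [] \<Rightarrow> ([], M(xs \<mapsto> []), 3)
               \<comment> \<open>lookup, return empty list, store\<close>
           | h # t \<Rightarrow>
               (let s = filter (\<lambda>x. x < h) t;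
                    g = filter (\<lambda>x. h \<le> x) t;
                    (rs, M1, c1) = memo_qs M s;
                    (rg, M2, c2) = memo_qs M1 g;
                    r = rs @ (h # rg)
                in (r, M2(xs \<mapsto> r),
                    1 + (length t + 1) + (length s + length g)
                      + c1 + c2 + (length rs + 1) + 1))))"
      \<comment> \<open>lookup; filtering t (linear); hash-consing each produced cell;
          two recursive calls; append (linear in first list) plus the cons; store\<close>
  by pat_completeness auto
termination
  by (relation "Wellfounded.measure (\<lambda>(M, xs). length xs)")
     (auto simp: less_Suc_eq_le)

definition second_run_cost :: "'a::linorder list \<Rightarrow> nat" where
  "second_run_cost L' =
     (let L = tl L';
          (_, M1, _) = memo_qs Map.empty L;
          (_, _, c) = memo_qs M1 L'
      in c)"

end

theory Submission
  imports Defs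
begin

declare memo_qs.simps[simp del]

function closedQ :: "('a::linorder list \<Rightarrow> 'b option) \<Rightarrow> 'a list \<Rightarrow> bool" where
  "closedQ M [] = (M [] \<noteq> None)"
| "closedQ M (h # t) = (M (h # t) \<noteq> None \<and> closedQ M (filter (\<lambda>x. x < h) t)
      \<and> closedQ M (filter (\<lambda>x. h \<le> x) t))"
  by pat_completeness auto
termination
  by (relation "Wellfounded.measure (\<lambda>(M, xs). length xs)") (auto simp: less_Suc_eq_le)

lemma closedQ_mono:
  "closedQ M xs \<Longrightarrow> (\<forall>k. M k \<noteq> None \<longrightarrow> M' k \<noteq> None) \<Longrightarrow> closedQ M' xs"
  by (induction M xs rule: closedQ.induct) auto

definition memo_inv :: "('a::linorder list \<Rightarrow> 'a list option) \<Rightarrow> bool" where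
  "memo_inv M = (\<forall>k r. M k = Some r \<longrightarrow> length r = length k \<and> closedQ M k)"

lemma memo_qs_props:
  "memo_inv M \<Longrightarrow> memo_qs M xs = (r, M', c) \<Longrightarrow>
     length r = length xs \<and> memo_inv M' \<and> M' xs \<noteq> None \<and> (\<forall>k. M k \<noteq> None \<longrightarrow> M' k \<noteq> None)"
proof (induction xs arbitrary: M r M' c rule: measure_induct_rule[of length])
  case (less xs)
  show ?case
  proof (cases "M xs")
    case (Some r0)
    then have "memo_qs M xs = (r0, M, 1)" by (subst memo_qs.simps) simp
    with less.prems Some show ?thesis by (auto simp: memo_inv_def)
  next
    case None
    show ?thesis
    proof (cases xs)
      case Nil
      then have "memo_qs M xs = ([], M([] \<mapsto> []), 3)" using None by (subst memo_qs.simps) simp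
      then have r: "r = []" and M': "M' = M([] \<mapsto> [])" using less.prems(2) by auto
      have mono: "\<forall>k. M k \<noteq> None \<longrightarrow> M' k \<noteq> None" by (simp add: M')
      have "memo_inv M'"
        unfolding memo_inv_def
      proof (intro allI impI)
        fix k r' assume k: "M' k = Some r'"
        show "length r' = length k \<and> closedQ M' k"
        proof (cases "k = []")
          case True then show ?thesis using k by (simp add: M')
        next
          case False
          then have "M k = Some r'" using k by (simp add: M')
          then show ?thesis using less.prems(1) closedQ_mono[OF _ mono] by (auto simp: memo_inv_def)
        qed
      qed
      moreover have "M' [] \<noteq> None" by (simp add: M')
      ultimately show ?thesis using mono by (simp add: r Nil)
    next
      case (Cons h t)
      obtain rs M1 c1 where e1: "memo_qs M (filter (\<lambda>x. x < h) t) = (rs, M1, c1)"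
        by (cases "memo_qs M (filter (\<lambda>x. x < h) t)") auto
      obtain rg M2 c2 where e2: "memo_qs M1 (filter (\<lambda>x. h \<le> x) t) = (rg, M2, c2)"
        by (cases "memo_qs M1 (filter (\<lambda>x. h \<le> x) t)") auto
      have ih1: "length rs = length (filter (\<lambda>x. x < h) t) \<and> memo_inv M1 \<and>
          M1 (filter (\<lambda>x. x < h) t) \<noteq> None \<and> (\<forall>k. M k \<noteq> None \<longrightarrow> M1 k \<noteq> None)"
        by (rule less.IH[OF _ less.prems(1) e1]) (auto simp: Cons le_imp_less_Suc)
      have ih2: "length rg = length (filter (\<lambda>x. h \<le> x) t) \<and> memo_inv M2 \<and>
          M2 (filter (\<lambda>x. h \<le> x) t) \<noteq> None \<and> (\<forall>k. M1 k \<noteq> None \<longrightarrow> M2 k \<noteq> None)"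
        by (rule less.IH[OF _ _ e2]) (use ih1 in \<open>auto simp: Cons le_imp_less_Suc\<close>)
      have eq: "memo_qs M xs = (rs @ h # rg, M2(xs \<mapsto> rs @ h # rg),
                    1 + (length t + 1) + (length (filter (\<lambda>x. x < h) t) + length (filter (\<lambda>x. h \<le> x) t))
                      + c1 + c2 + (length rs + 1) + 1)"
        using None unfolding Cons by (subst memo_qs.simps) (simp add: e1 e2 Let_def del: memo_qs.simps)
      have r: "r = rs @ h # rg" and M': "M' = M2(xs \<mapsto> rs @ h # rg)"
        using eq less.prems(2) by auto
      have lenr: "length r = length xs"
        using ih1 ih2 sum_length_filter_compl[of "\<lambda>x. x < h" t] by (simp add: r Cons not_less)
      have mono: "\<forall>k. M2 k \<noteq> None \<longrightarrow> M' k \<noteq> None" by (simp add: M')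
      have cl1: "closedQ M1 (filter (\<lambda>x. x < h) t)" using ih1 by (auto simp: memo_inv_def)
      have cl2: "closedQ M2 (filter (\<lambda>x. h \<le> x) t)" using ih2 by (auto simp: memo_inv_def)
      have mono1: "\<forall>k. M1 k \<noteq> None \<longrightarrow> M' k \<noteq> None" using ih2 mono by blast
      have ca: "closedQ M' (filter (\<lambda>x. x < h) t)" by (rule closedQ_mono[OF cl1 mono1])
      have cb: "closedQ M' (filter (\<lambda>x. h \<le> x) t)" by (rule closedQ_mono[OF cl2 mono])
      have cc: "M' xs \<noteq> None" by (simp add: M')
      have clx: "closedQ M' xs"
        unfolding Cons closedQ.simps using ca cb cc Cons by blast
      have "memo_inv M'"
        unfolding memo_inv_def
      proof (intro allI impI)
        fix k r' assume k: "M' k = Some r'"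
        show "length r' = length k \<and> closedQ M' k"
        proof (cases "k = xs")
          case True then show ?thesis using k lenr clx by (simp add: M' r)
        next
          case False
          then have "M2 k = Some r'" using k by (simp add: M')
          then show ?thesis using ih2 closedQ_mono[OF _ mono] by (auto simp: memo_inv_def)
        qed
      qed
      then show ?thesis using lenr cc mono1 ih1 by blast
    qed
  qed
qed

lemma memo_hit: "M xs = Some r \<Longrightarrow> memo_qs M xs = (r, M, 1)"
  by (subst memo_qs.simps) simp

lemma memo_nil: "snd (snd (memo_qs M [])) \<le> 3"
proof (cases "M []")
  case None then show ?thesis by (subst memo_qs.simps) simp
qed (simp add: memo_hit)

lemma memo_miss:
  assumes "M (h # t) = None"
    and "memo_qs M (filter (\<lambda>x. x < h) t) = (rs, M1, c1)"
    and "memo_qs M1 (filter (\<lambda>x. h \<le> x) t) = (rg, M2, c2)"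
  shows "memo_qs M (h # t) = (rs @ h # rg, M2((h # t) \<mapsto> rs @ h # rg),
     1 + (length t + 1) + (length (filter (\<lambda>x. x < h) t) + length (filter (\<lambda>x. h \<le> x) t))
        + c1 + c2 + (length rs + 1) + 1)"
  using assms by (subst memo_qs.simps) (simp add: Let_def del: memo_qs.simps)

lemma closedQ_dom: "closedQ M xs \<Longrightarrow> M xs \<noteq> None"
  by (cases xs) auto

fun Wf :: "'a::linorder \<Rightarrow> ('a \<Rightarrow> bool) \<Rightarrow> 'a list \<Rightarrow> nat" where
  "Wf a P [] = 0"
| "Wf a P (h # t) = (if P h then length (filter P (h # t))
      + Wf a (\<lambda>x. P x \<and> (if a < h then x < h else h \<le> x)) t else Wf a P t)"

lemma cost_path:
  "memo_inv M \<Longrightarrow> closedQ M (filter P L) \<Longrightarrow> a \<notin> set L \<Longrightarrow>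
    snd (snd (memo_qs M (filter (\<lambda>x. P x \<and> x < a) L))) \<le> 5 * Wf a P L + 3 \<and>
    snd (snd (memo_qs M (filter (\<lambda>x. P x \<and> a \<le> x) L))) \<le> 5 * Wf a P L + 3"
proof (induction L arbitrary: P M)
  case Nil
  then show ?case using memo_nil[of M] by simp
next
  case (Cons h t)
  show ?case
  proof (cases "P h")
    case False
    then show ?thesis using Cons.IH[of M P] Cons.prems by simp
  next
    case Ph: True
    define P' where "P' = (\<lambda>x. P x \<and> (if a < h then x < h else h \<le> x))"
    have Wf_eq: "Wf a P (h # t) = Suc (length (filter P t)) + Wf a P' t"
      using Ph by (simp add: P'_def)
    have cl: "closedQ M (filter (\<lambda>x. P x \<and> x < h) t)" "closedQ M (filter (\<lambda>x. P x \<and> h \<le> x) t)"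
      using Cons.prems(2) Ph by (simp_all add: filter_filter)
    have ha: "a \<noteq> h" "a \<notin> set t" using Cons.prems(3) by auto
    have invM: "memo_inv M" by fact
    show ?thesis
    proof (cases "h < a")
      case hlt: True
      have P'eq: "P' = (\<lambda>x. P x \<and> h \<le> x)" using hlt by (auto simp: P'_def)
      have clP': "closedQ M (filter P' t)" using cl(2) by (simp add: P'eq)
      note IH = Cons.IH[OF invM clP' ha(2)]
      have e2: "filter (\<lambda>x. P x \<and> a \<le> x) (h # t) = filter (\<lambda>x. P' x \<and> a \<le> x) t"
        using hlt by (auto simp: P'eq intro!: filter_cong)
      have part2: "snd (snd (memo_qs M (filter (\<lambda>x. P x \<and> a \<le> x) (h # t)))) \<le> 5 * Wf a P (h # t) + 3"
        unfolding e2 Wf_eq using IH by simp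
      define t' where "t' = filter (\<lambda>x. P x \<and> x < a) t"
      have e1: "filter (\<lambda>x. P x \<and> x < a) (h # t) = h # t'" using hlt Ph by (simp add: t'_def)
      have seq: "filter (\<lambda>x. x < h) t' = filter (\<lambda>x. P x \<and> x < h) t"
        using hlt by (auto simp: t'_def filter_filter intro!: filter_cong)
      have geq: "filter (\<lambda>x. h \<le> x) t' = filter (\<lambda>x. P' x \<and> x < a) t"
        using hlt by (auto simp: t'_def filter_filter P'eq intro!: filter_cong)
      have part1: "snd (snd (memo_qs M (h # t'))) \<le> 5 * Wf a P (h # t) + 3"
      proof (cases "M (h # t')")
        case (Some r) then show ?thesis by (simp add: memo_hit)
      next
        case None
        obtain r0 where r0: "M (filter (\<lambda>x. P x \<and> x < h) t) = Some r0"
          using closedQ_dom[OF cl(1)] by auto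
        have lr0: "length r0 = length (filter (\<lambda>x. P x \<and> x < h) t)"
          using invM r0 by (auto simp: memo_inv_def)
        have c1: "memo_qs M (filter (\<lambda>x. x < h) t') = (r0, M, 1)"
          using memo_hit[of M "filter (\<lambda>x. P x \<and> x < h) t" r0] r0 seq by simp
        obtain rg M2 c2 where c2: "memo_qs M (filter (\<lambda>x. h \<le> x) t') = (rg, M2, c2)"
          by (cases "memo_qs M (filter (\<lambda>x. h \<le> x) t')") auto
        have c2b: "c2 \<le> 5 * Wf a P' t + 3" using IH c2 by (simp add: geq)
        have lens: "length (filter (\<lambda>x. x < h) t') + length (filter (\<lambda>x. h \<le> x) t') = length t'"
          using sum_length_filter_compl[of "\<lambda>x. x < h" t'] by (simp add: not_less)
        have lt': "length t' \<le> length (filter P t)"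
          using length_filter_le[of "\<lambda>x. x < a" "filter P t"] by (simp add: t'_def)
        have ls: "length r0 \<le> length t'" using lr0 seq lens by simp
        have "snd (snd (memo_qs M (h # t'))) = 1 + (length t' + 1) + length t' + 1 + c2 + (length r0 + 1) + 1"
          using memo_miss[OF None c1 c2] lens by simp
        then show ?thesis using c2b lt' ls Wf_eq by simp
      qed
      show ?thesis using part1 part2 e1 by simp
    next
      case hge: False
      then have hgt: "a < h" using ha(1) by auto
      have P'eq: "P' = (\<lambda>x. P x \<and> x < h)" using hgt by (auto simp: P'_def)
      have clP': "closedQ M (filter P' t)" using cl(1) by (simp add: P'eq)
      note IH = Cons.IH[OF invM clP' ha(2)]
      have e1: "filter (\<lambda>x. P x \<and> x < a) (h # t) = filter (\<lambda>x. P' x \<and> x < a) t"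
        using hgt by (auto simp: P'eq intro!: filter_cong)
      have part1: "snd (snd (memo_qs M (filter (\<lambda>x. P x \<and> x < a) (h # t)))) \<le> 5 * Wf a P (h # t) + 3"
        unfolding e1 Wf_eq using IH by simp
      define t' where "t' = filter (\<lambda>x. P x \<and> a \<le> x) t"
      have e2: "filter (\<lambda>x. P x \<and> a \<le> x) (h # t) = h # t'" using hgt Ph by (simp add: t'_def)
      have seq: "filter (\<lambda>x. x < h) t' = filter (\<lambda>x. P' x \<and> a \<le> x) t"
        using hgt by (auto simp: t'_def filter_filter P'eq intro!: filter_cong)
      have geq: "filter (\<lambda>x. h \<le> x) t' = filter (\<lambda>x. P x \<and> h \<le> x) t"
        using hgt by (auto simp: t'_def filter_filter intro!: filter_cong)
      have part2: "snd (snd (memo_qs M (h # t'))) \<le> 5 * Wf a P (h # t) + 3"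
      proof (cases "M (h # t')")
        case (Some r) then show ?thesis by (simp add: memo_hit)
      next
        case None
        obtain rs M1 c1 where c1: "memo_qs M (filter (\<lambda>x. x < h) t') = (rs, M1, c1)"
          by (cases "memo_qs M (filter (\<lambda>x. x < h) t')") auto
        have c1b: "c1 \<le> 5 * Wf a P' t + 3" using IH c1 by (simp add: seq)
        have pr: "length rs = length (filter (\<lambda>x. x < h) t') \<and> memo_inv M1 \<and>
            M1 (filter (\<lambda>x. x < h) t') \<noteq> None \<and> (\<forall>k. M k \<noteq> None \<longrightarrow> M1 k \<noteq> None)"
          by (rule memo_qs_props[OF invM c1])
        obtain r0 where r0: "M1 (filter (\<lambda>x. P x \<and> h \<le> x) t) = Some r0"
          using closedQ_dom[OF cl(2)] pr by blast
        have c2: "memo_qs M1 (filter (\<lambda>x. h \<le> x) t') = (r0, M1, 1)"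
          using memo_hit[of M1 "filter (\<lambda>x. P x \<and> h \<le> x) t" r0] r0 geq by simp
        have lens: "length (filter (\<lambda>x. x < h) t') + length (filter (\<lambda>x. h \<le> x) t') = length t'"
          using sum_length_filter_compl[of "\<lambda>x. x < h" t'] by (simp add: not_less)
        have lt': "length t' \<le> length (filter P t)"
          using length_filter_le[of "\<lambda>x. a \<le> x" "filter P t"] by (simp add: t'_def)
        have ls: "length rs \<le> length t'" using pr lens by simp
        have "snd (snd (memo_qs M (h # t'))) = 1 + (length t' + 1) + length t' + c1 + 1 + (length rs + 1) + 1"
          using memo_miss[OF None c1 c2] lens by simp
        then show ?thesis using c1b lt' ls Wf_eq by simp
      qed
      show ?thesis using part1 part2 e2 by simp
    qed
  qed
qed

lemma second_bound:
  assumes "distinct (a # L)"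
  shows "second_run_cost (a # L) \<le> 3 * length L + 10 * Wf a (\<lambda>_. True) L + 12"
proof -
  obtain r1 M1 c1 where run1: "memo_qs Map.empty L = (r1, M1, c1)"
    by (cases "memo_qs Map.empty L") auto
  have inv0: "memo_inv (Map.empty :: 'a list \<Rightarrow> 'a list option)" by (simp add: memo_inv_def)
  have p1: "memo_inv M1 \<and> M1 L \<noteq> None" using memo_qs_props[OF inv0 run1] by simp
  then have invM1: "memo_inv M1" and clL: "closedQ M1 L" by (auto simp: memo_inv_def)
  have aL: "a \<notin> set L" using assms by simp
  have sc: "second_run_cost (a # L) = snd (snd (memo_qs M1 (a # L)))"
    unfolding second_run_cost_def using run1 by (simp add: split_def)
  have "snd (snd (memo_qs M1 (a # L))) \<le> 3 * length L + 10 * Wf a (\<lambda>_. True) L + 12"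
  proof (cases "M1 (a # L)")
    case (Some r) then show ?thesis by (simp add: memo_hit)
  next
    case None
    obtain rs M1' c1' where e1: "memo_qs M1 (filter (\<lambda>x. x < a) L) = (rs, M1', c1')"
      by (cases "memo_qs M1 (filter (\<lambda>x. x < a) L)") auto
    obtain rg M2 c2 where e2: "memo_qs M1' (filter (\<lambda>x. a \<le> x) L) = (rg, M2, c2)"
      by (cases "memo_qs M1' (filter (\<lambda>x. a \<le> x) L)") auto
    have b1: "c1' \<le> 5 * Wf a (\<lambda>_. True) L + 3"
      using cost_path[of M1 "\<lambda>_. True" L a] invM1 clL aL e1 by simp
    have pr: "length rs = length (filter (\<lambda>x. x < a) L) \<and> memo_inv M1' \<and>
            M1' (filter (\<lambda>x. x < a) L) \<noteq> None \<and> (\<forall>k. M1 k \<noteq> None \<longrightarrow> M1' k \<noteq> None)"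
      by (rule memo_qs_props[OF invM1 e1])
    have clL': "closedQ M1' L" using closedQ_mono[OF clL] pr by blast
    have b2: "c2 \<le> 5 * Wf a (\<lambda>_. True) L + 3"
      using cost_path[of M1' "\<lambda>_. True" L a] pr clL' aL e2 by simp
    have lens: "length (filter (\<lambda>x. x < a) L) + length (filter (\<lambda>x. a \<le> x) L) = length L"
      using sum_length_filter_compl[of "\<lambda>x. x < a" L] by (simp add: not_less)
    have "snd (snd (memo_qs M1 (a # L))) = 1 + (length L + 1) + length L + c1' + c2 + (length rs + 1) + 1"
      using memo_miss[OF None e1 e2] lens by simp
    moreover have "length rs \<le> length L" using pr lens by simp
    ultimately show ?thesis using b1 b2 by simp
  qed
  then show ?thesis using sc by simp
qed

lemma sum_perms_decomp:
  assumes "finite S" "S \<noteq> {}"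
  shows "(\<Sum>L\<in>permutations_of_set S. f L) = (\<Sum>h\<in>S. \<Sum>t\<in>permutations_of_set (S - {h}). f (h # t))"
proof -
  have "(\<Sum>L\<in>permutations_of_set S. f L) =
      (\<Sum>L\<in>(\<Union>h\<in>S. (\<lambda>xs. h # xs) ` permutations_of_set (S - {h})). f L)"
    using permutations_of_set_nonempty[OF assms(2)] by simp
  also have "\<dots> = (\<Sum>h\<in>S. \<Sum>L\<in>(\<lambda>xs. h # xs) ` permutations_of_set (S - {h}). f L)"
    by (rule sum.UNION_disjoint) (auto simp: assms(1))
  also have "\<dots> = (\<Sum>h\<in>S. \<Sum>t\<in>permutations_of_set (S - {h}). f (h # t))"
    by (rule sum.cong[OF refl], subst sum.reindex) (auto simp: inj_on_def)
  finally show ?thesis .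
qed

lemma sum_card_less:
  fixes B :: "'a::linorder set"
  shows "finite B \<Longrightarrow> 2 * (\<Sum>h\<in>B. card {x\<in>B. x < h}) = card B * (card B - 1)"
proof (induction B rule: finite_linorder_max_induct)
  case empty then show ?case by simp
next
  case (insert b B)
  have bB: "b \<notin> B" using insert by auto
  have "(\<Sum>h\<in>insert b B. card {x\<in>insert b B. x < h}) =
      card {x\<in>insert b B. x < b} + (\<Sum>h\<in>B. card {x\<in>insert b B. x < h})"
    using insert bB by simp
  also have "{x\<in>insert b B. x < b} = B" using insert by auto
  also have "(\<Sum>h\<in>B. card {x\<in>insert b B. x < h}) = (\<Sum>h\<in>B. card {x\<in>B. x < h})"
  proof (rule sum.cong[OF refl])
    fix h assume hB: "h \<in> B"
    then have "h < b" using insert by auto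
    then have "{x\<in>insert b B. x < h} = {x\<in>B. x < h}" by auto
    then show "card {x\<in>insert b B. x < h} = card {x\<in>B. x < h}" by simp
  qed
  finally have "(\<Sum>h\<in>insert b B. card {x\<in>insert b B. x < h}) = card B + (\<Sum>h\<in>B. card {x\<in>B. x < h})" .
  then show ?case using insert bB by (cases "card B") (auto simp: algebra_simps)
qed

lemma sum_card_greater:
  fixes B :: "'a::linorder set"
  shows "finite B \<Longrightarrow> 2 * (\<Sum>h\<in>B. card {x\<in>B. h < x}) = card B * (card B - 1)"
proof (induction B rule: finite_linorder_min_induct)
  case empty then show ?case by simp
next
  case (insert b B)
  have bB: "b \<notin> B" using insert by auto
  have "(\<Sum>h\<in>insert b B. card {x\<in>insert b B. h < x}) =
      card {x\<in>insert b B. b < x} + (\<Sum>h\<in>B. card {x\<in>insert b B. h < x})"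
    using insert bB by simp
  also have "{x\<in>insert b B. b < x} = B" using insert by auto
  also have "(\<Sum>h\<in>B. card {x\<in>insert b B. h < x}) = (\<Sum>h\<in>B. card {x\<in>B. h < x})"
  proof (rule sum.cong[OF refl])
    fix h assume hB: "h \<in> B"
    then have "b < h" using insert by auto
    then have "{x\<in>insert b B. h < x} = {x\<in>B. h < x}" by auto
    then show "card {x\<in>insert b B. h < x} = card {x\<in>B. h < x}" by simp
  qed
  finally have "(\<Sum>h\<in>insert b B. card {x\<in>insert b B. h < x}) = card B + (\<Sum>h\<in>B. card {x\<in>B. h < x})" .
  then show ?case using insert bB by (cases "card B") (auto simp: algebra_simps)
qed

lemma side_sum:
  fixes A :: "'a::linorder set"
  assumes fin: "finite A" and aA: "a \<notin> A"
  shows "4 * (\<Sum>h\<in>A. card {x\<in>A. if a < h then x < h else h < x}) \<le> 3 * card A ^ 2"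
proof -
  define f where "f h = card {x\<in>A. if a < h then x < h else h < x}" for h
  define Lo where "Lo = {x\<in>A. x < a}"
  define Hi where "Hi = {x\<in>A. a < x}"
  have AU: "A = Lo \<union> Hi" using aA by (auto simp: Lo_def Hi_def; metis linorder_neqE)
  have disj: "Lo \<inter> Hi = {}" by (auto simp: Lo_def Hi_def)
  have fLo: "finite Lo" and fHi: "finite Hi" using fin by (auto simp: Lo_def Hi_def)
  have cA: "card A = card Lo + card Hi" using AU disj fLo fHi card_Un_disjoint by metis
  have sA: "(\<Sum>h\<in>A. f h) = (\<Sum>h\<in>Lo. f h) + (\<Sum>h\<in>Hi. f h)"
    using AU disj fLo fHi sum.union_disjoint by metis
  have sHi: "(\<Sum>h\<in>Hi. f h) = (\<Sum>h\<in>Hi. card Lo + card {x\<in>Hi. x < h})"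
  proof (rule sum.cong[OF refl])
    fix h assume h: "h \<in> Hi"
    then have ah: "a < h" by (simp add: Hi_def)
    have "{x\<in>A. x < h} = Lo \<union> {x\<in>Hi. x < h}" using ah aA by (auto simp: Lo_def Hi_def; metis linorder_neqE)
    moreover have "Lo \<inter> {x\<in>Hi. x < h} = {}" using disj by auto
    ultimately have "card {x\<in>A. x < h} = card Lo + card {x\<in>Hi. x < h}"
      using fLo fHi by (simp add: card_Un_disjoint)
    then show "f h = card Lo + card {x\<in>Hi. x < h}" using ah by (simp add: f_def)
  qed
  have sLo: "(\<Sum>h\<in>Lo. f h) = (\<Sum>h\<in>Lo. card Hi + card {x\<in>Lo. h < x})"
  proof (rule sum.cong[OF refl])
    fix h assume h: "h \<in> Lo"
    then have ah: "h < a" by (simp add: Lo_def)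
    have "{x\<in>A. h < x} = Hi \<union> {x\<in>Lo. h < x}" using ah aA by (auto simp: Lo_def Hi_def; metis linorder_neqE)
    moreover have "Hi \<inter> {x\<in>Lo. h < x} = {}" using disj by auto
    ultimately have "card {x\<in>A. h < x} = card Hi + card {x\<in>Lo. h < x}"
      using fLo fHi by (simp add: card_Un_disjoint)
    moreover have nah: "\<not> a < h" using ah by auto
    ultimately show "f h = card Hi + card {x\<in>Lo. h < x}" by (simp add: f_def)
  qed
  define l where "l = card Lo"
  define r where "r = card Hi"
  define SH where "SH = (\<Sum>h\<in>Hi. card {x\<in>Hi. x < h})"
  define SL where "SL = (\<Sum>h\<in>Lo. card {x\<in>Lo. h < x})"
  have eH: "2 * SH = r * (r - 1)" using sum_card_less[OF fHi] by (simp add: SH_def r_def)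
  have eL: "2 * SL = l * (l - 1)" using sum_card_greater[OF fLo] by (simp add: SL_def l_def)
  have tot: "(\<Sum>h\<in>A. f h) = 2 * l * r + SH + SL"
    using sA sHi sLo by (simp add: sum.distrib SH_def SL_def l_def r_def)
  have r1: "r * (r - 1) \<le> r * r" by simp
  have l1: "l * (l - 1) \<le> l * l" by simp
  have sq: "2 * l * r \<le> l * l + r * r"
  proof (cases "l \<le> r")
    case True
    then obtain d where "r = l + d" using le_Suc_ex by blast
    then show ?thesis by (simp add: algebra_simps)
  next
    case False
    then obtain d where "l = r + d" using le_Suc_ex[of r l] by auto
    then show ?thesis by (simp add: algebra_simps)
  qed
  have "4 * (\<Sum>h\<in>A. f h) \<le> 3 * (l + r) ^ 2"
    using tot eH eL r1 l1 sq by (simp add: power2_eq_square algebra_simps)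
  then show ?thesis using cA by (simp add: f_def l_def r_def)
qed

lemma sum_Wf:
  fixes S :: "'a::linorder set"
  shows "card S = n \<Longrightarrow> finite S \<Longrightarrow> a \<notin> S \<Longrightarrow>
    (\<Sum>L\<in>permutations_of_set S. Wf a P L) \<le> 4 * card {x\<in>S. P x} * fact n"
proof (induction n arbitrary: S P)
  case 0
  then have "S = {}" by simp
  then show ?case by simp
next
  case (Suc n)
  have ne: "S \<noteq> {}" using Suc.prems by auto
  define A where "A = {x\<in>S. P x}"
  define k where "k = card A"
  define side where "side h = card {x\<in>A. if a < h then x < h else h < x}" for h
  have finA: "finite A" using Suc.prems by (simp add: A_def)
  have aA: "a \<notin> A" using Suc.prems by (simp add: A_def)
  have inner: "(\<Sum>t\<in>permutations_of_set (S - {h}). Wf a P (h # t))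
      \<le> fact n * (if P h then k + 4 * side h else 4 * k)" if hS: "h \<in> S" for h
  proof -
    have cS: "card (S - {h}) = n" using Suc.prems hS by simp
    have fS: "finite (S - {h})" using Suc.prems by simp
    have aS: "a \<notin> S - {h}" using Suc.prems by simp
    show ?thesis
    proof (cases "P h")
      case False
      have "(\<Sum>t\<in>permutations_of_set (S - {h}). Wf a P (h # t))
          = (\<Sum>t\<in>permutations_of_set (S - {h}). Wf a P t)" using False by simp
      also have "\<dots> \<le> 4 * card {x\<in>S - {h}. P x} * fact n" by (rule Suc.IH[OF cS fS aS])
      also have "{x\<in>S - {h}. P x} = A" using False by (auto simp: A_def)
      finally show ?thesis using False by (simp add: k_def mult_ac)
    next
      case True
      define Ph where "Ph = (\<lambda>x. P x \<and> (if a < h then x < h else h \<le> x))"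
      have hA: "h \<in> A" using hS True by (simp add: A_def)
      have k1: "k \<ge> 1" using hA finA by (simp add: k_def Suc_le_eq card_gt_0_iff; blast)
      have each: "Wf a P (h # t) = k + Wf a Ph t" if t: "t \<in> permutations_of_set (S - {h})" for t
      proof -
        have st: "set t = S - {h}" "distinct t" using t by (auto simp: permutations_of_set_def)
        have "length (filter P t) = card ({x. P x} \<inter> (S - {h}))"
          using st by (simp add: distinct_length_filter)
        also have "{x. P x} \<inter> (S - {h}) = A - {h}" by (auto simp: A_def)
        also have "card (A - {h}) = k - 1" using hA finA by (simp add: k_def)
        finally have "length (filter P t) = k - 1" .
        then show ?thesis using True k1 by (simp add: Ph_def)
      qed
      have "(\<Sum>t\<in>permutations_of_set (S - {h}). Wf a P (h # t))
          = (\<Sum>t\<in>permutations_of_set (S - {h}). k + Wf a Ph t)"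
        by (rule sum.cong[OF refl]) (rule each)
      also have "\<dots> = fact n * k + (\<Sum>t\<in>permutations_of_set (S - {h}). Wf a Ph t)"
        using fS cS by (simp add: sum.distrib)
      also have "(\<Sum>t\<in>permutations_of_set (S - {h}). Wf a Ph t) \<le> 4 * card {x\<in>S - {h}. Ph x} * fact n"
        by (rule Suc.IH[OF cS fS aS])
      also have "{x\<in>S - {h}. Ph x} = {x\<in>A. if a < h then x < h else h < x}"
        by (auto simp: Ph_def A_def)
      finally show ?thesis using True by (simp add: side_def algebra_simps)
    qed
  qed
  define B where "B h = (if P h then k + 4 * side h else 4 * k)" for h
  have "(\<Sum>L\<in>permutations_of_set S. Wf a P L)
      = (\<Sum>h\<in>S. \<Sum>t\<in>permutations_of_set (S - {h}). Wf a P (h # t))"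
    by (rule sum_perms_decomp) (use Suc.prems ne in auto)
  also have "\<dots> \<le> (\<Sum>h\<in>S. fact n * B h)"
    unfolding B_def by (rule sum_mono, erule inner)
  also have "\<dots> = fact n * (\<Sum>h\<in>S. B h)" by (simp add: sum_distrib_left)
  finally have le0: "(\<Sum>L\<in>permutations_of_set S. Wf a P L) \<le> fact n * (\<Sum>h\<in>S. B h)" .
  have sB: "(\<Sum>h\<in>S. B h) = (\<Sum>h\<in>S \<inter> {x. P x}. k + 4 * side h) + (\<Sum>h\<in>S \<inter> - {x. P x}. 4 * k)"
    unfolding B_def using Suc.prems by (simp add: sum.If_cases)
  have sA: "S \<inter> {x. P x} = A" by (auto simp: A_def)
  have cc: "card (S \<inter> - {x. P x}) = Suc n - k"
  proof -
    have "S \<inter> - {x. P x} = S - A" by (auto simp: A_def)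
    moreover have "A \<subseteq> S" by (auto simp: A_def)
    ultimately show ?thesis using Suc.prems finA by (simp add: card_Diff_subset k_def)
  qed
  have sk: "(\<Sum>h\<in>A. k + 4 * side h) = k * k + 4 * (\<Sum>h\<in>A. side h)"
    by (simp add: sum.distrib sum_distrib_left k_def)
  have "(\<Sum>h\<in>S. B h) = k * k + 4 * (\<Sum>h\<in>A. side h) + (Suc n - k) * (4 * k)"
    using sB sA cc sk by simp
  then have le1: "(\<Sum>L\<in>permutations_of_set S. Wf a P L) \<le>
      fact n * (k * k + 4 * (\<Sum>h\<in>A. side h) + (Suc n - k) * (4 * k))" using le0 by simp
  have sd: "4 * (\<Sum>h\<in>A. side h) \<le> 3 * k ^ 2"
    using side_sum[OF finA aA] by (simp add: side_def k_def)
  have kle: "k \<le> Suc n" using Suc.prems card_mono[of S A] by (auto simp: k_def A_def)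
  then obtain d where d: "Suc n = k + d" using le_Suc_ex by blast
  have "k * k + 4 * (\<Sum>h\<in>A. side h) + (Suc n - k) * (4 * k) \<le> 4 * k * Suc n"
    using sd d by (simp add: power2_eq_square algebra_simps)
  then have "fact n * (k * k + 4 * (\<Sum>h\<in>A. side h) + (Suc n - k) * (4 * k)) \<le> fact n * (4 * k * Suc n)"
    by (rule mult_le_mono2)
  also have "fact n * (4 * k * Suc n) = 4 * card {x\<in>S. P x} * fact (Suc n)"
    by (simp add: k_def A_def algebra_simps)
  finally show ?case using le1 by linarith
qed

lemma total_bound:
  fixes K :: "'a::linorder set"
  assumes fin: "finite K" and ne: "K \<noteq> {}"
  shows "(\<Sum>L'\<in>permutations_of_set K. second_run_cost L') \<le> 55 * card K * fact (card K)"
proof -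
  obtain m where m: "card K = Suc m" using fin ne by (cases "card K") auto
  have inner: "(\<Sum>t\<in>permutations_of_set (K - {a}). second_run_cost (a # t)) \<le> (55 * m + 12) * fact m"
    if aK: "a \<in> K" for a
  proof -
    have cK: "card (K - {a}) = m" using m aK fin by simp
    have "(\<Sum>t\<in>permutations_of_set (K - {a}). second_run_cost (a # t))
        \<le> (\<Sum>t\<in>permutations_of_set (K - {a}). 3 * m + 12 + 10 * Wf a (\<lambda>_. True) t)"
    proof (rule sum_mono)
      fix t assume t: "t \<in> permutations_of_set (K - {a})"
      then have st: "set t = K - {a}" "distinct t" by (auto simp: permutations_of_set_def)
      then have lt: "length t = m" using cK distinct_card by metis
      have "distinct (a # t)" using st by simp
      from second_bound[OF this] show "second_run_cost (a # t) \<le> 3 * m + 12 + 10 * Wf a (\<lambda>_. True) t"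
        using lt by simp
    qed
    also have "\<dots> = (3 * m + 12) * fact m + 10 * (\<Sum>t\<in>permutations_of_set (K - {a}). Wf a (\<lambda>_. True) t)"
      using fin cK by (simp add: sum.distrib sum_distrib_left)
    also have "(\<Sum>t\<in>permutations_of_set (K - {a}). Wf a (\<lambda>_. True) t) \<le> 4 * card {x\<in>K - {a}. True} * fact m"
      by (rule sum_Wf) (use cK fin in auto)
    also have "card {x\<in>K - {a}. True} = m" using cK by (simp add: set_diff_eq)
    finally show ?thesis by (simp add: algebra_simps)
  qed
  have "(\<Sum>L'\<in>permutations_of_set K. second_run_cost L')
      = (\<Sum>a\<in>K. \<Sum>t\<in>permutations_of_set (K - {a}). second_run_cost (a # t))"
    by (rule sum_perms_decomp[OF fin ne])
  also have "\<dots> \<le> (\<Sum>a\<in>K. (55 * m + 12) * fact m)" by (rule sum_mono) (rule inner)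
  also have "\<dots> = Suc m * ((55 * m + 12) * fact m)" using m by simp
  also have "\<dots> \<le> 55 * Suc m * fact (Suc m)" by (simp add: algebra_simps)
  finally show ?thesis using m by simp
qed

theorem mainTheorem1:
  shows "\<exists>C::real. \<forall>K::'a::linorder set. finite K \<and> K \<noteq> {} \<longrightarrow>
           measure_pmf.expectation (pmf_of_set (permutations_of_set K))
             (\<lambda>L'. real (second_run_cost L')) \<le> C * real (card K)"
proof (intro exI allI impI)
  fix K :: "'a::linorder set"
  assume "finite K \<and> K \<noteq> {}"
  then have fin: "finite K" and ne: "K \<noteq> {}" by auto
  have pne: "permutations_of_set K \<noteq> {}" using fin by (simp add: permutations_of_set_empty_iff)
  have fp: "finite (permutations_of_set K)" by simp
  have "measure_pmf.expectation (pmf_of_set (permutations_of_set K)) (\<lambda>L'. real (second_run_cost L'))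
      = (\<Sum>L'\<in>permutations_of_set K. real (second_run_cost L')) / real (fact (card K))"
    using integral_pmf_of_set[OF pne fp] fin by simp
  also have "(\<Sum>L'\<in>permutations_of_set K. real (second_run_cost L'))
      = real (\<Sum>L'\<in>permutations_of_set K. second_run_cost L')" by simp
  also have "\<dots> \<le> real (55 * card K * fact (card K))" using total_bound[OF fin ne] by linarith
  finally have "measure_pmf.expectation (pmf_of_set (permutations_of_set K)) (\<lambda>L'. real (second_run_cost L'))
      \<le> real (55 * card K * fact (card K)) / real (fact (card K))"
    by (simp add: divide_right_mono)
  also have "\<dots> = 55 * real (card K)" by simp
  finally show "measure_pmf.expectation (pmf_of_set (permutations_of_set K))
             (\<lambda>L'. real (second_run_cost L')) \<le> 55 * real (card K)" .
qed

end
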